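(* Consider the scalar Gaussian wiretap channel with amplitude constraint $\mathsf{R}>0$ and $0<\sigma_1^2<\sigma_2^2$, let $X^\star$ be a secrecy-capacity-achieving input, and let $\breve{h}:\mathbb{C}\to\mathbb{C}$ be the complex extension (defined in the context) of the function $h(y)=\sigma_1^2 f_{Y_1}(y)g'(y)$. Then for every \[ \mathsf{B} \ge \mathsf{R} \frac{\sigma_2^2+\sigma_1^2}{ \sigma_2^2-\sigma_1^2}, \] we have \[ \max_{|z|\le \mathsf{B}} |\breve{h}(z)| \ge \left( c_1 \mathsf{B} - c_2 \mathsf{R} \right) \frac{ \exp\left( -\frac{(\mathsf{B}+\mathsf{R})^2}{2\sigma_1^2} \right) }{\sqrt{2\pi \sigma_1^2}} , \] where $c_1=1-\frac{\sigma_1^2 }{\sigma_2^2}$ and $c_2=1 + \frac{\sigma_1^2 }{\sigma_2^2}$.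
   Context: Scalar Gaussian wiretap channel: $Y_i=X+N_i$, $N_i\sim\mathcal{N}(0,\sigma_i^2)$, $i=1,2$, mutually independent with $X$. $C_s(\sigma_1^2,\sigma_2^2,\mathsf{R},1)=\max I(X;Y_1)-I(X;Y_2)$ over distributions of $X$ on $[-\mathsf{R},\mathsf{R}]$; $X^\star$ is a maximizer. $\phi_\sigma(w)=\frac{1}{\sqrt{2\pi\sigma^2}}e^{-w^2/(2\sigma^2)}$, and $f_{Y_i}(w)=\mathbb{E}[\phi_{\sigma_i}(w-X^\star)]$. $N\sim\mathcal{N}(0,\sigma_2^2-\sigma_1^2)$ independent of $X^\star$. $g(y)=\mathbb{E}\left[\log\frac{f_{Y_2}(y+N)}{f_{Y_1}(y)}\right]$ and $h(y)=\sigma_1^2 f_{Y_1}(y)g'(y)$, which equals $\sigma_1^2 f_{Y_1}(y)\left(\frac{\mathbb{E}_N[\mathbb{E}[X^\star|Y_2=y+N]]-y}{\sigma_2^2}-\frac{\mathbb{E}[X^\star|Y_1=y]-y}{\sigma_1^2}\right)$ and also $\frac{\sigma_1^2 f_{Y_1}(y)\mathbb{E}[N\log f_{Y_2}(y+N)]}{\sigma_2^2-\sigma_1^2}-\mathbb{E}[X^\star\phi_{\sigma_1}(y-X^\star)]+y f_{Y_1}(y)$. The complex extension $\breve{h}(z)$ is obtained by replacing $y$ by $z\in\mathbb{C}$ in this last expression, with $\phi_\sigma$ and $f_{Y_i}$ extended to complex arguments by the same formulas and $\log$ the principal branch. *)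

theory Defs
  imports "HOL-Probability.Probability"
begin

text \<open>Gaussian channel Y = X + N with X ~ P, N ~ N(0,v) independent (v = variance).
  The underlying space carries the pair (X, N).\<close>
definition gauss_chan :: "real measure \<Rightarrow> real \<Rightarrow> (real \<times> real) measure" where
  "gauss_chan P v = P \<Otimes>\<^sub>M density lborel (normal_density 0 (sqrt v))"

definition chan_MI :: "real measure \<Rightarrow> real \<Rightarrow> real" where
  "chan_MI P v = prob_space.mutual_information (gauss_chan P v) (exp 1) borel borel fst (\<lambda>(x, n). x + n)"

definition input_dist :: "real \<Rightarrow> real measure \<Rightarrow> bool" where
  "input_dist R P \<longleftrightarrow> prob_space P \<and> sets P = sets borel \<and> measure P {-R..R} = 1"

definition secrecy_obj :: "real \<Rightarrow> real \<Rightarrow> real measure \<Rightarrow> real" where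
  "secrecy_obj v1 v2 P = chan_MI P v1 - chan_MI P v2"

definition secrecy_optimal :: "real \<Rightarrow> real \<Rightarrow> real \<Rightarrow> real measure \<Rightarrow> bool" where
  "secrecy_optimal R v1 v2 P \<longleftrightarrow> input_dist R P \<and>
     (\<forall>Q. input_dist R Q \<longrightarrow> secrecy_obj v1 v2 Q \<le> secrecy_obj v1 v2 P)"

definition phi_c :: "real \<Rightarrow> complex \<Rightarrow> complex" where
  "phi_c v w = exp (- (w ^ 2) / (2 * of_real v)) / of_real (sqrt (2 * pi * v))"

definition fY_c :: "real measure \<Rightarrow> real \<Rightarrow> complex \<Rightarrow> complex" where
  "fY_c P v w = (\<integral>x. phi_c v (w - of_real x) \<partial>P)"

text \<open>Complex extension of h(y) (last expression in the context), with
  N ~ N(0, v2 - v1) and principal logarithm Ln.\<close>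
definition h_breve :: "real measure \<Rightarrow> real \<Rightarrow> real \<Rightarrow> complex \<Rightarrow> complex" where
  "h_breve P v1 v2 z =
     of_real v1 * fY_c P v1 z
       * (\<integral>w. of_real (normal_density 0 (sqrt (v2 - v1)) w * w) * Ln (fY_c P v2 (z + of_real w)) \<partial>lborel)
       / of_real (v2 - v1)
     - (\<integral>x. of_real x * phi_c v1 (z - of_real x) \<partial>P)
     + z * fY_c P v1 z"

end

theory Submission
  imports Defs
begin

definition phr :: "real \<Rightarrow> real \<Rightarrow> real" where
  "phr v y = exp (- (y ^ 2) / (2 * v)) / sqrt (2 * pi * v)"

lemma phi_c_real: "phi_c v (of_real y) = of_real (phr v y)"
proof -
  have e: "- ((of_real y) ^ 2 / (2 * of_real v)) = (of_real (- (y ^ 2 / (2 * v))) :: complex)" by simp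
  show ?thesis unfolding phi_c_def phr_def
    by (simp only: minus_divide_left[symmetric] e exp_of_real of_real_divide[symmetric])
qed

lemma phr_pos: "v > 0 \<Longrightarrow> phr v y > 0"
  by (simp add: phr_def)

lemma phr_mono: "v > 0 \<Longrightarrow> \<bar>y\<bar> \<le> \<bar>y'\<bar> \<Longrightarrow> phr v y' \<le> phr v y"
proof -
  assume v: "v > 0" and a: "\<bar>y\<bar> \<le> \<bar>y'\<bar>"
  have "y^2 \<le> y'^2" using a by (metis abs_le_square_iff)
  hence "- (y' ^ 2) / (2 * v) \<le> - (y ^ 2) / (2 * v)" using v by (simp add: divide_right_mono)
  thus ?thesis unfolding phr_def using v by (intro divide_right_mono) auto
qed

lemma phr_cont[measurable]: "phr v \<in> borel_measurable borel"
  unfolding phr_def by measurable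

lemma phr_shift: "v > 0 \<Longrightarrow> phr v (u + w - x) = phr v (u - x) * exp (- (2 * u * w + w ^ 2) / (2 * v)) * exp (x * w / v)"
proof -
  assume v: "v > 0"
  have "- ((u + w - x) ^ 2) / (2 * v) = - ((u - x) ^ 2) / (2 * v) + (- (2 * u * w + w ^ 2) / (2 * v)) + x * w / v"
    (is "_ = ?a + ?b + ?c")
    using v by (simp add: field_simps power2_eq_square)
  hence "phr v (u + w - x) = exp (?a + ?b + ?c) / sqrt (2 * pi * v)"
    unfolding phr_def by simp
  also have "\<dots> = phr v (u - x) * exp ?b * exp ?c" unfolding phr_def exp_add by simp
  finally show ?thesis .
qed

lemma phr_le: "v > 0 \<Longrightarrow> phr v y \<le> 1 / sqrt (2 * pi * v)"
  using phr_mono[of v 0 y] by (simp add: phr_def)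

locale inp =
  fixes P :: "real measure" and R :: real
  assumes P: "prob_space P" and sP[measurable_cong]: "sets P = sets borel"
    and AEP: "AE x in P. \<bar>x\<bar> \<le> R" and Rpos: "R \<ge> 0"
begin

interpretation prob_space P by (rule P)

definition fr :: "real \<Rightarrow> real \<Rightarrow> real" where
  "fr v y = (\<integral>x. phr v (y - x) \<partial>P)"

lemma int_phr: "v > 0 \<Longrightarrow> integrable P (\<lambda>x. phr v (y - x))"
proof (rule integrable_const_bound[where B="1 / sqrt (2 * pi * v)"])
  assume v: "v > 0"
  show "AE x in P. norm (phr v (y - x)) \<le> 1 / sqrt (2 * pi * v)"
    using phr_le[OF v] phr_pos[OF v] by (intro AE_I2) (simp add: abs_of_pos)
qed simp

lemma int_xphr: assumes v: "v > 0" shows "integrable P (\<lambda>x. x * phr v (y - x))"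
proof -
  have ae: "AE x in P. norm (x * phr v (y - x)) \<le> norm (R * phr v (y - x))"
    using AEP
  proof eventually_elim
    case (elim x)
    have "0 < phr v (y - x)" by (rule phr_pos[OF v])
    thus ?case using elim Rpos by (simp add: abs_mult mult_right_mono)
  qed
  have int: "integrable P (\<lambda>x. R * phr v (y - x))" using int_phr[OF v] by simp
  show ?thesis
    by (rule Bochner_Integration.integrable_bound[OF int _ ae]) measurable
qed

lemma fr_lower: "v > 0 \<Longrightarrow> fr v y \<ge> phr v (\<bar>y\<bar> + R)"
proof -
  assume v: "v > 0"
  have "(\<integral>x. phr v (\<bar>y\<bar> + R) \<partial>P) \<le> fr v y"
    unfolding fr_def
    apply (rule integral_mono_AE[OF _ int_phr[OF v]])
     apply simp
    using AEP apply eventually_elim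
    apply (rule phr_mono[OF v]) by (auto simp: abs_le_iff)
  thus ?thesis by (simp add: prob_space)
qed

lemma fr_pos: "v > 0 \<Longrightarrow> fr v y > 0"
  using fr_lower[of v y] phr_pos[of v] by (meson less_le_trans)

lemma T_bound: "v > 0 \<Longrightarrow> \<bar>\<integral>x. x * phr v (y - x) \<partial>P\<bar> \<le> R * fr v y"
proof -
  assume v: "v > 0"
  have "\<bar>\<integral>x. x * phr v (y - x) \<partial>P\<bar> \<le> (\<integral>x. \<bar>x * phr v (y - x)\<bar> \<partial>P)"
    by (rule integral_abs_bound)
  also have "\<dots> \<le> (\<integral>x. R * phr v (y - x) \<partial>P)"
    apply (rule integral_mono_AE)
      apply (rule integrable_abs[OF int_xphr[OF v]])
     apply (rule integrable_mult_right[OF int_phr[OF v]])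
    using AEP apply eventually_elim
    using phr_pos[OF v] by (simp add: abs_mult mult_right_mono less_imp_le)
  finally show ?thesis unfolding fr_def by simp
qed

lemma fr_shift:
  assumes v: "v > 0"
  shows "fr v (u + w) \<le> exp (- (2 * u * w + w ^ 2) / (2 * v)) * exp (R * \<bar>w\<bar> / v) * fr v u"
    and "fr v (u + w) \<ge> exp (- (2 * u * w + w ^ 2) / (2 * v)) * exp (- (R * \<bar>w\<bar> / v)) * fr v u"
proof -
  let ?E = "exp (- (2 * u * w + w ^ 2) / (2 * v))"
  have eq: "fr v (u + w) = (\<integral>x. phr v (u - x) * ?E * exp (x * w / v) \<partial>P)"
    unfolding fr_def by (simp add: phr_shift[OF v])
  have i1: "integrable P (\<lambda>x. phr v (u - x) * ?E * exp (x * w / v))"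
    using int_phr[OF v, of "u + w"] by (simp add: phr_shift[OF v])
  have i2: "integrable P (\<lambda>x. phr v (u - x) * ?E * exp (R * \<bar>w\<bar> / v))"
    using int_phr[OF v, of u] by simp
  have i3: "integrable P (\<lambda>x. phr v (u - x) * ?E * exp (- (R * \<bar>w\<bar> / v)))"
    using int_phr[OF v, of u] by simp
  have "(\<integral>x. phr v (u - x) * ?E * exp (x * w / v) \<partial>P) \<le> (\<integral>x. phr v (u - x) * ?E * exp (R * \<bar>w\<bar> / v) \<partial>P)"
    apply (rule integral_mono_AE[OF i1 i2])
    using AEP apply eventually_elim
  proof -
    fix x assume x: "\<bar>x\<bar> \<le> R"
    have "\<bar>x * w\<bar> \<le> R * \<bar>w\<bar>" using x by (simp add: abs_mult mult_right_mono)
    hence "x * w \<le> R * \<bar>w\<bar>" by linarith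
    hence "x * w / v \<le> R * \<bar>w\<bar> / v" using v by (simp add: divide_right_mono)
    hence "exp (x * w / v) \<le> exp (R * \<bar>w\<bar> / v)" by simp
    moreover have "0 \<le> phr v (u - x) * ?E" using phr_pos[OF v] by (simp add: less_imp_le)
    ultimately show "phr v (u - x) * ?E * exp (x * w / v) \<le> phr v (u - x) * ?E * exp (R * \<bar>w\<bar> / v)"
      by (rule mult_left_mono)
  qed
  thus "fr v (u + w) \<le> ?E * exp (R * \<bar>w\<bar> / v) * fr v u"
    unfolding eq by (simp add: fr_def mult_ac)
  have "(\<integral>x. phr v (u - x) * ?E * exp (- (R * \<bar>w\<bar> / v)) \<partial>P) \<le> (\<integral>x. phr v (u - x) * ?E * exp (x * w / v) \<partial>P)"
    apply (rule integral_mono_AE[OF i3 i1])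
    using AEP apply eventually_elim
  proof -
    fix x assume x: "\<bar>x\<bar> \<le> R"
    have "\<bar>x * w\<bar> \<le> R * \<bar>w\<bar>" using x by (simp add: abs_mult mult_right_mono)
    hence xw: "- (R * \<bar>w\<bar>) \<le> x * w" by linarith
    have "- (R * \<bar>w\<bar> / v) \<le> x * w / v" using divide_right_mono[OF xw, of v] v by simp
    hence "exp (- (R * \<bar>w\<bar> / v)) \<le> exp (x * w / v)" by simp
    moreover have "0 \<le> phr v (u - x) * ?E" using phr_pos[OF v] by (simp add: less_imp_le)
    ultimately show "phr v (u - x) * ?E * exp (- (R * \<bar>w\<bar> / v)) \<le> phr v (u - x) * ?E * exp (x * w / v)"
      by (rule mult_left_mono)
  qed
  thus "fr v (u + w) \<ge> ?E * exp (- (R * \<bar>w\<bar> / v)) * fr v u"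
    unfolding eq by (simp add: fr_def mult_ac)
qed

lemma D_bound:
  assumes v: "v > 0"
  shows "\<bar>ln (fr v (u + w)) - ln (fr v u) + (2 * u * w + w ^ 2) / (2 * v)\<bar> \<le> R * \<bar>w\<bar> / v"
proof -
  let ?a = "- (2 * u * w + w ^ 2) / (2 * v)" and ?b = "R * \<bar>w\<bar> / v"
  have p1: "fr v (u + w) > 0" and p2: "fr v u > 0" using fr_pos[OF v] by auto
  have "fr v (u + w) \<le> exp (?a + ?b + ln (fr v u))"
    using fr_shift(1)[OF v, of u w] p2 by (simp add: exp_add)
  hence u1: "ln (fr v (u + w)) \<le> ?a + ?b + ln (fr v u)"
    using p1 by (metis ln_exp ln_le_cancel_iff exp_gt_zero)
  have "exp (?a - ?b + ln (fr v u)) \<le> fr v (u + w)"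
    using fr_shift(2)[OF v, of u w] p2 by (simp add: exp_add exp_diff exp_minus field_simps)
  hence u2: "?a - ?b + ln (fr v u) \<le> ln (fr v (u + w))"
    using p1 by (metis ln_exp ln_le_cancel_iff exp_gt_zero)
  have "?a = - ((2 * u * w + w ^ 2) / (2 * v))" by (rule minus_divide_left[symmetric])
  thus ?thesis using u1 u2 by linarith
qed

lemma fr_meas: "(\<lambda>w. fr v (u + w)) \<in> borel_measurable lborel"
proof -
  have m: "(\<lambda>(w, x). phr v (u + w - x)) \<in> borel_measurable (lborel \<Otimes>\<^sub>M P)"
  proof -
    have i: "(\<lambda>p. u + fst p - snd p) \<in> borel_measurable (lborel \<Otimes>\<^sub>M P)"
      by measurable
    have "(\<lambda>p. phr v (u + fst p - snd p)) \<in> borel_measurable (lborel \<Otimes>\<^sub>M P)"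
      by (rule measurable_compose[OF i phr_cont])
    thus ?thesis by (simp add: case_prod_beta)
  qed
  show ?thesis unfolding fr_def
    using borel_measurable_lebesgue_integral[OF m] by simp
qed

lemma A_bound:
  assumes v1: "0 < v1" and v12: "v1 < v2"
  shows "\<bar>(\<integral>w. normal_density 0 (sqrt (v2 - v1)) w * w * ln (fr v2 (B + w)) \<partial>lborel) + B * (v2 - v1) / v2\<bar>
           \<le> R * (v2 - v1) / v2"
proof -
  define s where "s = v2 - v1"
  have s: "s > 0" using v12 by (simp add: s_def)
  have v2: "v2 > 0" using v1 v12 by simp
  define \<psi> where "\<psi> = normal_density 0 (sqrt s)"
  define D where "D w = ln (fr v2 (B + w)) - ln (fr v2 B) + (2 * B * w + w ^ 2) / (2 * v2)" for w
  have sq: "sqrt s > 0" using s by simp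
  have m1: "has_bochner_integral lborel (\<lambda>x. \<psi> x * x) 0"
    unfolding \<psi>_def using normal_moment_nz_1[where \<mu>=0 and \<sigma>="sqrt s", OF sq] .
  have m2: "has_bochner_integral lborel (\<lambda>x. \<psi> x * x ^ 2) s"
    unfolding \<psi>_def using normal_moment_even[where \<mu>=0 and \<sigma>="sqrt s" and k=1, OF sq] s
    by simp
  have m3: "has_bochner_integral lborel (\<lambda>x. \<psi> x * x ^ 3) 0"
    unfolding \<psi>_def using normal_moment_odd[where \<mu>=0 and \<sigma>="sqrt s" and k=1, OF sq]
    by (simp add: numeral_3_eq_3)
  have iw2: "integrable lborel (\<lambda>x. \<psi> x * x ^ 2)" using m2 by (simp add: has_bochner_integral_iff)
  have lnm[measurable]: "(\<lambda>w. ln (fr v2 (B + w))) \<in> borel_measurable lborel"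
    by (rule borel_measurable_ln[OF fr_meas])
  have Dmeas[measurable]: "D \<in> borel_measurable lborel" unfolding D_def
    by measurable
  have Dle: "\<bar>D w\<bar> \<le> R * \<bar>w\<bar> / v2" for w unfolding D_def using D_bound[OF v2, of B w] .
  have ptw: "\<bar>\<psi> w * w * D w\<bar> \<le> R / v2 * (\<psi> w * w ^ 2)" for w
  proof -
    have "\<bar>\<psi> w * w * D w\<bar> = \<psi> w * \<bar>w\<bar> * \<bar>D w\<bar>" by (simp add: abs_mult \<psi>_def)
    also have "\<dots> \<le> \<psi> w * \<bar>w\<bar> * (R * \<bar>w\<bar> / v2)"
      by (rule mult_left_mono[OF Dle]) (simp add: \<psi>_def)
    also have "\<dots> = R / v2 * (\<psi> w * w ^ 2)" by (simp add: power2_eq_square field_simps)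
    finally show ?thesis .
  qed
  have iD: "integrable lborel (\<lambda>w. \<psi> w * w * D w)"
  proof (rule Bochner_Integration.integrable_bound[OF integrable_mult_right[OF iw2, of "R / v2"]])
    show "(\<lambda>w. \<psi> w * w * D w) \<in> borel_measurable lborel" unfolding \<psi>_def by measurable
    show "AE x in lborel. norm (\<psi> x * x * D x) \<le> norm (R / v2 * (\<psi> x * x ^ 2))"
    proof (intro AE_I2)
      fix x
      have nn: "0 \<le> R / v2 * (\<psi> x * x ^ 2)" using Rpos v2 by (simp add: \<psi>_def)
      show "norm (\<psi> x * x * D x) \<le> norm (R / v2 * (\<psi> x * x ^ 2))" using ptw[of x]
        by (simp only: real_norm_def abs_of_nonneg[OF nn])
    qed
  qed
  define E where "E = (\<integral>w. \<psi> w * w * D w \<partial>lborel)"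
  have Ebd: "\<bar>E\<bar> \<le> R * s / v2"
  proof -
    have "\<bar>E\<bar> \<le> (\<integral>w. \<bar>\<psi> w * w * D w\<bar> \<partial>lborel)" unfolding E_def by (rule integral_abs_bound)
    also have "\<dots> \<le> (\<integral>w. R / v2 * (\<psi> w * w ^ 2) \<partial>lborel)"
      by (rule integral_mono[OF integrable_abs[OF iD] integrable_mult_right[OF iw2] ptw])
    also have "\<dots> = R / v2 * s" using m2 by (simp add: has_bochner_integral_iff)
    finally show ?thesis by simp
  qed
  have hb: "has_bochner_integral lborel
     (\<lambda>w. ln (fr v2 B) * (\<psi> w * w) - B / v2 * (\<psi> w * w ^ 2) - 1 / (2 * v2) * (\<psi> w * w ^ 3) + \<psi> w * w * D w)
     (ln (fr v2 B) * 0 - B / v2 * s - 1 / (2 * v2) * 0 + E)"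
    unfolding E_def
    by (intro has_bochner_integral_add has_bochner_integral_diff has_bochner_integral_mult_right
        m1 m2 m3 has_bochner_integral_integrable iD)
  have ptw2: "\<psi> w * w * ln (fr v2 (B + w)) =
      ln (fr v2 B) * (\<psi> w * w) - B / v2 * (\<psi> w * w ^ 2) - 1 / (2 * v2) * (\<psi> w * w ^ 3) + \<psi> w * w * D w" for w
  proof -
    have e1: "ln (fr v2 (B + w)) = ln (fr v2 B) - (2 * B * w + w ^ 2) / (2 * v2) + D w"
      by (simp add: D_def)
    have e2: "(2 * B * w + w ^ 2) / (2 * v2) = B / v2 * w + 1 / (2 * v2) * w ^ 2"
      using v2 by (simp add: field_simps)
    have gen: "p * w * (L - (c1 * w + c2 * w ^ 2) + d) = L * (p * w) - c1 * (p * w ^ 2) - c2 * (p * w ^ 3) + p * w * d"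
      for p L c1 c2 d :: real
      by (simp add: algebra_simps power2_eq_square power3_eq_cube)
    show ?thesis unfolding e1 e2 gen ..
  qed
  have "(\<integral>w. \<psi> w * w * ln (fr v2 (B + w)) \<partial>lborel) = - (B * s / v2) + E"
    using has_bochner_integral_integral_eq[OF hb] by (simp add: ptw2)
  thus ?thesis using Ebd unfolding \<psi>_def s_def by simp
qed

end

theorem lemma9:
  fixes R v1 v2 B :: real and P :: "real measure"
  assumes "R > 0" and "0 < v1" and "v1 < v2"
    and "secrecy_optimal R v1 v2 P"
    and "B \<ge> R * (v2 + v1) / (v2 - v1)"
  shows "\<exists>z. cmod z \<le> B \<and>
    cmod (h_breve P v1 v2 z) \<ge>
      ((1 - v1 / v2) * B - (1 + v1 / v2) * R) * exp (- ((B + R) ^ 2) / (2 * v1)) / sqrt (2 * pi * v1)"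
proof -
  note R = assms(1) and v1 = assms(2) and v12 = assms(3) and Bge = assms(5)
  have v2: "v2 > 0" using v1 v12 by simp
  have s: "v2 - v1 > 0" using v12 by simp
  have inpd: "input_dist R P" using assms(4) unfolding secrecy_optimal_def by (rule conjunct1)
  have P: "prob_space P" and sP: "sets P = sets borel" and m1: "measure P {-R..R} = 1"
    using inpd unfolding input_dist_def by auto
  have AEP: "AE x in P. \<bar>x\<bar> \<le> R"
  proof -
    have "AE x in P. x \<in> {-R..R}" by (rule prob_space.AE_prob_1[OF P m1])
    thus ?thesis by (rule AE_mp) (intro AE_I2, simp add: abs_le_iff)
  qed
  interpret I: inp P R by (rule inp.intro[OF P sP AEP]) (rule less_imp_le[OF R])
  define K where "K = (1 - v1 / v2) * B - (1 + v1 / v2) * R"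
  have "R * (v2 + v1) \<le> B * (v2 - v1)" using Bge s by (simp add: field_simps)
  hence "0 \<le> (B * (v2 - v1) - R * (v2 + v1)) / v2" using v2 by simp
  also have "(B * (v2 - v1) - R * (v2 + v1)) / v2 = K" unfolding K_def using v2 by (simp add: field_simps)
  finally have K0: "0 \<le> K" .
  have B0: "B \<ge> 0"
  proof -
    have "0 \<le> R * (v2 + v1) / (v2 - v1)" using R v1 v2 s by simp
    thus ?thesis using Bge by linarith
  qed
  have fY: "fY_c P v (of_real y) = of_real (I.fr v y)" for v y
  proof -
    have "(\<lambda>x. phi_c v (of_real y - of_real x)) = (\<lambda>x. of_real (phr v (y - x)))"
      by (rule ext) (metis of_real_diff phi_c_real)
    thus ?thesis unfolding fY_c_def I.fr_def by simp
  qed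
  define \<psi> where "\<psi> = normal_density 0 (sqrt (v2 - v1))"
  define A where "A = (\<integral>w. \<psi> w * w * ln (I.fr v2 (B + w)) \<partial>lborel)"
  define T where "T = (\<integral>x. x * phr v1 (B - x) \<partial>P)"
  define f where "f = I.fr v1 B"
  have e1: "(\<lambda>w. of_real (\<psi> w * w) * Ln (fY_c P v2 (of_real B + of_real w))) =
            (\<lambda>w. of_real (\<psi> w * w * ln (I.fr v2 (B + w))))"
  proof (rule ext)
    fix w
    have "fY_c P v2 (of_real B + of_real w) = of_real (I.fr v2 (B + w))"
      by (metis of_real_add fY)
    moreover have "I.fr v2 (B + w) > 0" by (rule I.fr_pos[OF v2])
    ultimately show "of_real (\<psi> w * w) * Ln (fY_c P v2 (of_real B + of_real w)) =
            of_real (\<psi> w * w * ln (I.fr v2 (B + w)))"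
      by (simp add: Ln_of_real)
  qed
  have e2: "(\<lambda>x. of_real x * phi_c v1 (of_real B - of_real x)) = (\<lambda>x. of_real (x * phr v1 (B - x)))"
    by (rule ext) (metis of_real_diff phi_c_real of_real_mult)
  define H where "H = v1 * f * A / (v2 - v1) - T + B * f"
  have hH: "h_breve P v1 v2 (of_real B) = of_real H"
    unfolding h_breve_def H_def A_def T_def f_def fY
    unfolding \<psi>_def[symmetric] e1 e2 integral_complex_of_real by simp
  have Abd: "\<bar>A + B * (v2 - v1) / v2\<bar> \<le> R * (v2 - v1) / v2"
    unfolding A_def \<psi>_def by (rule I.A_bound[OF v1 v12])
  have Tbd: "\<bar>T\<bar> \<le> R * f" unfolding T_def f_def by (rule I.T_bound[OF v1])
  have fl: "f \<ge> phr v1 (B + R)" using I.fr_lower[OF v1, of B] B0 by (simp add: f_def)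
  have pp: "phr v1 (B + R) > 0" by (rule phr_pos[OF v1])
  have f0: "f > 0" using fl pp by linarith
  define E where "E = A + B * (v2 - v1) / v2"
  have HE: "H = B * f - v1 / v2 * B * f + v1 * f * E / (v2 - v1) - T"
    unfolding H_def E_def using s v2 by (simp add: field_simps)
  have "\<bar>v1 * f * E / (v2 - v1)\<bar> = v1 * f / (v2 - v1) * \<bar>E\<bar>"
    using v1 f0 s by (simp add: abs_mult)
  also have "\<dots> \<le> v1 * f / (v2 - v1) * (R * (v2 - v1) / v2)"
    by (rule mult_left_mono) (use Abd v1 f0 s in \<open>auto simp: E_def\<close>)
  also have "\<dots> = v1 / v2 * R * f"
  proof -
    have "v2 - v1 \<noteq> 0" "v2 \<noteq> 0" using s v2 by auto
    thus ?thesis by (simp add: field_simps)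
  qed
  finally have Ebd: "\<bar>v1 * f * E / (v2 - v1)\<bar> \<le> v1 / v2 * R * f" .
  have Kf: "K * f = B * f - v1 / v2 * B * f - v1 / v2 * R * f - R * f"
    unfolding K_def by (simp add: algebra_simps)
  have "K * f \<le> H" unfolding HE Kf using abs_le_D2[OF Ebd] abs_le_D1[OF Tbd] by linarith
  moreover have "K * phr v1 (B + R) \<le> K * f" by (rule mult_left_mono[OF fl K0])
  ultimately have HK: "K * phr v1 (B + R) \<le> cmod (h_breve P v1 v2 (of_real B))"
    unfolding hH by simp
  show ?thesis
    apply (rule exI[of _ "of_real B"])
    using HK B0 by (simp add: K_def phr_def)
qed

end
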